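(* Let $M(n)$ denote the maximum modulus of an independence root over all finite simple graphs on $n$ vertices. Then $$\frac{\log_3(M(n))}{n}=\frac{1}{3}+o(1)\quad\text{as } n\to\infty.$$
   Context: For a finite simple graph $G$, the independence polynomial is $i(G,x)=\sum_{k\ge 0} i_k x^k$, where $i_k$ is the number of independent sets of size $k$ in $G$; its complex roots are the independence roots of $G$. *)

theory Defs
  imports "HOL-Analysis.Analysis" "HOL-Computational_Algebra.Polynomial"
begin

definition simple_graph_on :: "nat \<Rightarrow> (nat \<Rightarrow> nat \<Rightarrow> bool) \<Rightarrow> bool" where
  "simple_graph_on n E \<longleftrightarrow>
     (\<forall>x y. E x y \<longrightarrow> x < n \<and> y < n) \<and>
     (\<forall>x y. E x y \<longrightarrow> E y x) \<and>
     (\<forall>x. \<not> E x x)"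

definition independent_set :: "nat \<Rightarrow> (nat \<Rightarrow> nat \<Rightarrow> bool) \<Rightarrow> nat set \<Rightarrow> bool" where
  "independent_set n E S \<longleftrightarrow> S \<subseteq> {..<n} \<and> (\<forall>x\<in>S. \<forall>y\<in>S. \<not> E x y)"

definition indep_poly :: "nat \<Rightarrow> (nat \<Rightarrow> nat \<Rightarrow> bool) \<Rightarrow> complex poly" where
  "indep_poly n E =
     (\<Sum>k\<le>n. monom (of_nat (card {S. independent_set n E S \<and> card S = k})) k)"

definition max_indep_root_modulus :: "nat \<Rightarrow> real" where
  "max_indep_root_modulus n =
     Max {cmod z | z E. simple_graph_on n E \<and> poly (indep_poly n E) z = 0}"

end

theory Submission
  imports Defs "HOL-Real_Asymp.Real_Asymp"
begin


definition indepset :: "(nat \<Rightarrow> nat \<Rightarrow> bool) \<Rightarrow> nat set \<Rightarrow> nat set \<Rightarrow> bool" where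
  "indepset E V S \<longleftrightarrow> S \<subseteq> V \<and> (\<forall>x\<in>S. \<forall>y\<in>S. \<not> E x y)"

definition ip :: "(nat \<Rightarrow> nat \<Rightarrow> bool) \<Rightarrow> nat set \<Rightarrow> 'a::comm_ring_1 \<Rightarrow> 'a" where
  "ip E V z = (\<Sum>S\<in>{S. indepset E V S}. z ^ card S)"

definition nbr :: "(nat \<Rightarrow> nat \<Rightarrow> bool) \<Rightarrow> nat \<Rightarrow> nat set" where
  "nbr E v = insert v {w. E v w}"

lemma finite_indepsets: "finite V \<Longrightarrow> finite {S. indepset E V S}"
  by (rule finite_subset[of _ "Pow V"]) (auto simp: indepset_def)

lemma indepsets_split:
  assumes v: "v \<in> V" and sym: "\<And>x y. E x y \<Longrightarrow> E y x" and irr: "\<not> E v v"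
  shows "{S. indepset E V S} = {S. indepset E (V - {v}) S} \<union> insert v ` {S. indepset E (V - nbr E v) S}"
proof (rule set_eqI, rule iffI)
  fix S assume "S \<in> {S. indepset E V S}"
  hence S: "indepset E V S" by simp
  show "S \<in> {S. indepset E (V - {v}) S} \<union> insert v ` {S. indepset E (V - nbr E v) S}"
  proof (cases "v \<in> S")
    case True
    have "indepset E (V - nbr E v) (S - {v})" using S True unfolding indepset_def nbr_def by blast
    moreover have "S = insert v (S - {v})" using True by blast
    ultimately show ?thesis by blast
  next
    case False
    then show ?thesis using S unfolding indepset_def by blast
  qed
next
  fix S assume "S \<in> {S. indepset E (V - {v}) S} \<union> insert v ` {S. indepset E (V - nbr E v) S}"
  then show "S \<in> {S. indepset E V S}"
  proof
    assume "S \<in> {S. indepset E (V - {v}) S}" then show ?thesis unfolding indepset_def by auto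
  next
    assume "S \<in> insert v ` {S. indepset E (V - nbr E v) S}"
    then obtain T where T: "indepset E (V - nbr E v) T" and ST: "S = insert v T" by blast
    have "\<forall>x\<in>S. \<forall>y\<in>S. \<not> E x y"
      using T irr sym v unfolding ST indepset_def nbr_def by blast
    moreover have "S \<subseteq> V" using T v unfolding ST indepset_def by blast
    ultimately show ?thesis unfolding indepset_def by simp
  qed
qed

lemma ip_rec:
  assumes fin: "finite V" and v: "v \<in> V" and sym: "\<And>x y. E x y \<Longrightarrow> E y x" and irr: "\<not> E v v"
  shows "ip E V z = ip E (V - {v}) z + z * ip E (V - nbr E v) z"
proof -
  have disj: "{S. indepset E (V - {v}) S} \<inter> insert v ` {S. indepset E (V - nbr E v) S} = {}"
    unfolding indepset_def by blast
  have inj: "inj_on (insert v) {S. indepset E (V - nbr E v) S}"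
    unfolding inj_on_def indepset_def nbr_def by blast
  have f1: "finite {S. indepset E (V - {v}) S}" using fin by (intro finite_indepsets) auto
  have f2: "finite {S. indepset E (V - nbr E v) S}" using fin by (intro finite_indepsets) auto
  have spl: "{S. indepset E V S} = {S. indepset E (V - {v}) S} \<union> insert v ` {S. indepset E (V - nbr E v) S}"
    by (rule indepsets_split[of v V E, OF v sym irr])
  have "ip E V z = (\<Sum>S\<in>{S. indepset E (V - {v}) S} \<union> insert v ` {S. indepset E (V - nbr E v) S}. z ^ card S)"
    unfolding ip_def by (subst spl) (rule refl)
  also have "\<dots> = (\<Sum>S\<in>{S. indepset E (V - {v}) S}. z ^ card S) + (\<Sum>S\<in>insert v ` {S. indepset E (V - nbr E v) S}. z ^ card S)"
    by (rule sum.union_disjoint) (use f1 f2 disj in auto)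
  also have "(\<Sum>S\<in>insert v ` {S. indepset E (V - nbr E v) S}. z ^ card S) = (\<Sum>S\<in>{S. indepset E (V - nbr E v) S}. z ^ card (insert v S))"
    by (rule sum.reindex[OF inj, unfolded comp_def])
  also have "\<dots> = (\<Sum>S\<in>{S. indepset E (V - nbr E v) S}. z * z ^ card S)"
  proof (rule sum.cong[OF refl])
    fix S assume "S \<in> {S. indepset E (V - nbr E v) S}"
    hence "finite S" "v \<notin> S" using fin unfolding indepset_def nbr_def by (auto intro: finite_subset)
    thus "z ^ card (insert v S) = z * z ^ card S" by simp
  qed
  also have "\<dots> = z * ip E (V - nbr E v) z" unfolding ip_def by (simp add: sum_distrib_left)
  finally show ?thesis unfolding ip_def by simp
qed



lemma ip_empty: "ip E {} z = 1"
proof -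
  have "{S. indepset E {} S} = {{}}" unfolding indepset_def by auto
  thus ?thesis unfolding ip_def by simp
qed

lemma ip_isolated:
  assumes "finite V" "v \<in> V" "\<And>x y. E x y \<Longrightarrow> E y x" "\<And>x. \<not> E x x" "\<forall>w\<in>V. \<not> E v w"
  shows "ip E V z = (1 + z) * ip E (V - {v}) z"
proof -
  have "V - nbr E v = V - {v}" using assms(5) unfolding nbr_def by auto
  thus ?thesis using ip_rec[of V v E z] assms by (simp add: algebra_simps)
qed

lemma ip_edgefree:
  assumes "finite V" "\<And>x y. E x y \<Longrightarrow> E y x" "\<And>x. \<not> E x x" "\<forall>x\<in>V. \<forall>y\<in>V. \<not> E x y"
  shows "ip E V z = (1 + z) ^ card V"
  using assms(1,4)
proof (induction V rule: finite_induct)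
  case empty
  then show ?case by (simp add: ip_empty)
next
  case (insert x F)
  have "ip E (insert x F) z = (1 + z) * ip E (insert x F - {x}) z"
    by (rule ip_isolated) (use insert assms(2,3) in auto)
  also have "insert x F - {x} = F" using insert by auto
  finally show ?case using insert by simp
qed

lemma ip_triangle:
  assumes fin: "finite V" and sym: "\<And>x y. E x y \<Longrightarrow> E y x" and irr: "\<And>x. \<not> E x x"
    and in_V: "a \<in> V" "b \<in> V" "c \<in> V" and dist: "a \<noteq> b" "a \<noteq> c" "b \<noteq> c"
    and edges: "E a b" "E a c" "E b c"
    and noedge: "\<forall>w\<in>V - {a,b,c}. \<not> E a w \<and> \<not> E b w \<and> \<not> E c w"
  shows "ip E V z = (1 + 3 * z) * ip E (V - {a,b,c}) z"
proof -
  have e1: "V - nbr E a = V - {a,b,c}" using noedge edges unfolding nbr_def by auto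
  have e2: "V - {a} - nbr E b = V - {a,b,c}" using noedge edges sym unfolding nbr_def by auto
  have e3: "V - {a} - {b} - {c} = V - {a,b,c}" by auto
  have "ip E V z = ip E (V - {a}) z + z * ip E (V - {a,b,c}) z"
    using ip_rec[of V a E z] fin in_V sym irr e1 by simp
  moreover have "ip E (V - {a}) z = ip E (V - {a} - {b}) z + z * ip E (V - {a,b,c}) z"
    using ip_rec[of "V - {a}" b E z] fin in_V sym irr e2 dist by simp
  moreover have "ip E (V - {a} - {b}) z = (1 + z) * ip E (V - {a,b,c}) z"
  proof -
    have "ip E (V - {a} - {b}) z = (1 + z) * ip E (V - {a} - {b} - {c}) z"
      by (rule ip_isolated) (use fin in_V dist sym irr noedge in auto)
    thus ?thesis using e3 by simp
  qed
  ultimately show ?thesis by (simp add: algebra_simps)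
qed

definition G :: "nat \<Rightarrow> nat \<Rightarrow> nat \<Rightarrow> bool" where
  "G m x y \<longleftrightarrow> (x < 3*m \<and> y < 3*m \<and> x div 3 = y div 3 \<and> x \<noteq> y)
      \<or> (x = 3*m \<and> y < 3*m \<and> y mod 3 \<noteq> 0) \<or> (y = 3*m \<and> x < 3*m \<and> x mod 3 \<noteq> 0)"

lemma G_sym: "G m x y \<Longrightarrow> G m y x" unfolding G_def by auto
lemma G_irr: "\<not> G m x x" unfolding G_def by auto

lemma ip_G_tri:
  assumes "k \<le> m" "finite W" "W \<subseteq> {3*m<..}"
  shows "ip (G m) ({..<3*k} \<union> W) z = (1 + 3*z)^k * ip (G m) W z"
  using assms(1)
proof (induction k)
  case 0
  then show ?case by simp
next
  case (Suc k)
  let ?V = "{..<3*Suc k} \<union> W"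
  have eq: "?V - {3*k, 3*k+1, 3*k+2} = {..<3*k} \<union> W" using assms(3) Suc.prems by force
  have "ip (G m) ?V z = (1 + 3*z) * ip (G m) (?V - {3*k, 3*k+1, 3*k+2}) z"
  proof (rule ip_triangle)
    show "finite ?V" using assms(2) by simp
    show "\<forall>w\<in>?V - {3*k, 3*k+1, 3*k+2}. \<not> G m (3*k) w \<and> \<not> G m (3*k+1) w \<and> \<not> G m (3*k+2) w"
    proof
      fix w assume w: "w \<in> ?V - {3*k, 3*k+1, 3*k+2}"
      show "\<not> G m (3*k) w \<and> \<not> G m (3*k+1) w \<and> \<not> G m (3*k+2) w"
      proof (cases "w \<in> W")
        case True
        then have "w > 3*m" using assms(3) by auto
        then show ?thesis using Suc.prems unfolding G_def by auto
      next
        case False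
        then have "w < 3*k" using w by auto
        then have "w div 3 < k" by auto
        moreover have "(3*k+1) div 3 = k" "(3*k+2) div 3 = k" "(3*k) div 3 = k" by auto
        ultimately show ?thesis using Suc.prems unfolding G_def by auto
      qed
    qed
  next
    have "(3*k+1) div 3 = k" "(3*k+2) div 3 = k" "(3*k) div 3 = k" by auto
    then show "G m (3*k) (3*k+1)" "G m (3*k) (3*k+2)" "G m (3*k+1) (3*k+2)"
      using Suc.prems unfolding G_def by auto
  qed (use Suc.prems G_sym G_irr in \<open>auto\<close>)
  then show ?case using Suc eq by simp
qed

lemma ip_G:
  assumes "3*m < n"
  shows "ip (G m) {..<n} z = (1 + z)^(n - 3*m - 1) * ((1 + 3*z)^m + z * (1 + z)^m)"
proof -
  let ?v = "3*m"
  have r1: "ip (G m) {..<n} z = ip (G m) ({..<n} - {?v}) z + z * ip (G m) ({..<n} - nbr (G m) ?v) z"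
    by (rule ip_rec) (use assms G_sym G_irr in auto)
  have s1: "{..<n} - {?v} = {..<3*m} \<union> {3*m<..<n}" using assms by auto
  have W: "ip (G m) {3*m<..<n} z = (1 + z)^(n - 3*m - 1)"
    by (subst ip_edgefree) (auto simp: G_def G_sym G_irr)
  have p1: "ip (G m) ({..<n} - {?v}) z = (1 + 3*z)^m * (1 + z)^(n - 3*m - 1)"
    unfolding s1 by (subst ip_G_tri) (auto simp: W)
  have s2: "{..<n} - nbr (G m) ?v = (\<lambda>i. 3*i) ` {..<m} \<union> {3*m<..<n}"
  proof (rule set_eqI)
    fix x
    show "x \<in> {..<n} - nbr (G m) ?v \<longleftrightarrow> x \<in> (\<lambda>i. 3*i) ` {..<m} \<union> {3*m<..<n}"
    proof
      assume "x \<in> {..<n} - nbr (G m) ?v"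
      hence x: "x < n" "x \<noteq> 3*m" "\<not> G m (3*m) x" unfolding nbr_def by auto
      show "x \<in> (\<lambda>i. 3*i) ` {..<m} \<union> {3*m<..<n}"
      proof (cases "x < 3*m")
        case True
        then have "x mod 3 = 0" using x unfolding G_def by auto
        then have "x = 3 * (x div 3)" "x div 3 < m" using True by auto
        then show ?thesis by blast
      next
        case False
        then show ?thesis using x by auto
      qed
    next
      assume "x \<in> (\<lambda>i. 3*i) ` {..<m} \<union> {3*m<..<n}"
      then show "x \<in> {..<n} - nbr (G m) ?v" using assms unfolding nbr_def G_def by auto
    qed
  qed
  have card2: "card ((\<lambda>i. 3*i) ` {..<m} \<union> {3*m<..<n}) = m + (n - 3*m - 1)"
  proof -
    have "card ((\<lambda>i. 3*i) ` {..<m}) = m" by (subst card_image) (auto simp: inj_on_def)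
    moreover have "(\<lambda>i. 3*i) ` {..<m} \<inter> {3*m<..<n} = {}" by auto
    ultimately show ?thesis by (subst card_Un_disjoint) auto
  qed
  have p2: "ip (G m) ({..<n} - nbr (G m) ?v) z = (1 + z)^(m + (n - 3*m - 1))"
    unfolding s2
  proof (subst ip_edgefree)
    show "\<forall>x\<in>(\<lambda>i. 3*i) ` {..<m} \<union> {3*m<..<n}. \<forall>y\<in>(\<lambda>i. 3*i) ` {..<m} \<union> {3*m<..<n}. \<not> G m x y"
      unfolding G_def by auto
  qed (auto simp: G_sym G_irr card2)
  show ?thesis using r1 p1 p2 by (simp add: algebra_simps power_add)
qed



lemma poly_indep: "poly (indep_poly n E) z = ip E {..<n} z"
proof -
  let ?I = "{S. indepset E {..<n} S}"
  have fin: "finite ?I" by (rule finite_indepsets) simp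
  have ind: "independent_set n E S = indepset E {..<n} S" for S
    unfolding independent_set_def indepset_def by simp
  have "poly (indep_poly n E) z = (\<Sum>k\<le>n. of_nat (card {S. independent_set n E S \<and> card S = k}) * z ^ k)"
    unfolding indep_poly_def poly_sum poly_monom by simp
  also have "\<dots> = (\<Sum>k\<le>n. (\<Sum>S\<in>{S \<in> ?I. card S = k}. z ^ card S))"
  proof (rule sum.cong[OF refl])
    fix k
    have "(\<Sum>S\<in>{S \<in> ?I. card S = k}. z ^ card S) = (\<Sum>S\<in>{S \<in> ?I. card S = k}. z ^ k)"
      by (rule sum.cong) auto
    also have "\<dots> = of_nat (card {S \<in> ?I. card S = k}) * z ^ k" by simp
    finally show "of_nat (card {S. independent_set n E S \<and> card S = k}) * z ^ k = (\<Sum>S\<in>{S \<in> ?I. card S = k}. z ^ card S)"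
      by (simp add: ind)
  qed
  also have "\<dots> = (\<Sum>S\<in>?I. z ^ card S)"
  proof (rule sum.group[OF fin])
    show "finite {..n}" by simp
    show "card ` ?I \<subseteq> {..n}"
    proof
      fix k assume "k \<in> card ` ?I"
      then obtain S where "S \<subseteq> {..<n}" "k = card S" unfolding indepset_def by auto
      then show "k \<in> {..n}" using card_mono[of "{..<n}" S] by auto
    qed
  qed
  finally show ?thesis unfolding ip_def by simp
qed

lemma simple_graph_G: "3*m < n \<Longrightarrow> simple_graph_on n (G m)"
  unfolding simple_graph_on_def G_def by auto

lemma real_root_exists:
  fixes m :: nat assumes m: "m \<ge> 1"
  shows "\<exists>t::real. 3^m \<le> t \<and> (3*t - 1)^m - t * (t - 1)^m = 0"
proof -
  define h where "h = (\<lambda>t::real. (3*t - 1)^m - t * (t - 1)^m)"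
  define a :: real where "a = 3^m"
  define b :: real where "b = 4^m + 3"
  have a3: "a \<ge> 3" unfolding a_def using m
    by (metis le_numeral_extra(4) power_increasing power_one_right zero_le_numeral one_le_numeral order_trans)
  have ab: "a \<le> b" unfolding a_def b_def
    using power_mono[of "3::real" 4 m] by simp
  have ha: "h a > 0"
  proof -
    have "(3*(a - 1))^m < (3*a - 1)^m"
      by (rule power_strict_mono) (use a3 m in auto)
    moreover have "(3*(a-1))^m = a * (a - 1)^m" by (simp only: power_mult_distrib a_def[symmetric])
    ultimately show ?thesis unfolding h_def by simp
  qed
  have hb: "h b < 0"
  proof -
    have b3: "b \<ge> 3" unfolding b_def by simp
    have "(3*b - 1)^m \<le> (4*(b - 1))^m"
      by (rule power_mono) (use b3 in auto)
    also have "\<dots> = 4^m * (b - 1)^m" by (rule power_mult_distrib)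
    also have "\<dots> < b * (b - 1)^m"
    proof (rule mult_strict_right_mono)
      show "4^m < b" unfolding b_def by simp
      show "0 < (b - 1)^m" using b3 by simp
    qed
    finally show ?thesis unfolding h_def by simp
  qed
  have cont: "continuous_on {a..b} h" unfolding h_def by (intro continuous_intros)
  obtain t where "a \<le> t" "t \<le> b" "h t = 0"
    using IVT2'[of h b 0 a, OF _ _ ab cont] ha hb by auto
  thus ?thesis unfolding h_def a_def by auto
qed

lemma lower_bound:
  assumes n: "n \<ge> 4"
  shows "\<exists>E z. simple_graph_on n E \<and> poly (indep_poly n E) z = 0 \<and> cmod z \<ge> 3^((n-1) div 3)"
proof -
  define m where "m = (n - 1) div 3"
  have m1: "m \<ge> 1" and mn: "3*m < n" unfolding m_def using n by auto
  obtain t :: real where t: "3^m \<le> t" "(3*t - 1)^m - t * (t - 1)^m = 0"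
    using real_root_exists[OF m1] by auto
  have t1: "t \<ge> 1" using t(1) by (meson one_le_numeral one_le_power order_trans)
  have rb: "(1 + 3*(-t))^m + (-t) * (1 + (-t))^m = 0"
  proof -
    have "(1 + 3*(-t))^m = (-1)^m * (3*t - 1)^m"
      by (subst power_mult_distrib[symmetric]) simp
    moreover have "(1 + (-t))^m = (-1)^m * (t - 1)^m"
      by (subst power_mult_distrib[symmetric]) simp
    ultimately have "(1 + 3*(-t))^m + (-t) * (1 + (-t))^m = (-1)^m * ((3*t - 1)^m - t * (t - 1)^m)"
      by (simp add: algebra_simps)
    thus ?thesis using t(2) by simp
  qed
  define z :: complex where "z = of_real (-t)"
  have "(1 + 3*z)^m + z * (1 + z)^m = of_real ((1 + 3*(-t))^m + (-t) * (1 + (-t))^m)"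
    unfolding z_def by simp
  also have "\<dots> = 0" unfolding rb by simp
  finally have "(1 + 3*z)^m + z * (1 + z)^m = 0" .
  hence "poly (indep_poly n (G m)) z = 0" unfolding poly_indep ip_G[OF mn] by simp
  moreover have "cmod z \<ge> 3^m" unfolding z_def using t(1) t1 by simp
  ultimately show ?thesis using simple_graph_G[OF mn] unfolding m_def by blast
qed



definition maxind :: "(nat \<Rightarrow> nat \<Rightarrow> bool) \<Rightarrow> nat set \<Rightarrow> nat set \<Rightarrow> bool" where
  "maxind E V M \<longleftrightarrow> indepset E V M \<and> (\<forall>w\<in>V - M. \<exists>x\<in>M. E w x)"

lemma finite_maxind: "finite V \<Longrightarrow> finite {M. maxind E V M}"
  by (rule finite_subset[of _ "Pow V"]) (auto simp: maxind_def indepset_def)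

lemma cube_le_pow3: "(n::nat)^3 \<le> 3^n"
proof (induction n rule: less_induct)
  case (less n)
  show ?case
  proof (cases "n \<le> 3")
    case True
    then have "n = 0 \<or> n = 1 \<or> n = 2 \<or> n = 3" by auto
    then show ?thesis by auto
  next
    case False
    then obtain k where k: "n = Suc k" "k \<ge> 3" by (cases n) auto
    have ih: "k^3 \<le> 3^k" using less k by auto
    have "(Suc k)^3 \<le> 3 * k^3"
    proof -
      have "3*k*k \<le> k*k*k" using k(2) by (intro mult_right_mono) auto
      moreover have "3*k \<le> k*k" using k(2) by (intro mult_right_mono) auto
      moreover have "9*k \<le> k*k*k" using \<open>3*k*k \<le> k*k*k\<close> \<open>3*k \<le> k*k\<close> by linarith
      moreover have "(Suc k)^3 = k*k*k + 3*(k*k) + 3*k + 1" by (simp add: power3_eq_cube algebra_simps)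
      moreover have "3 * k^3 = 3*(k*k*k)" by (simp add: power3_eq_cube)
      ultimately show ?thesis using k(2) by linarith
    qed
    also have "\<dots> \<le> 3 * 3^k" using ih by simp
    finally show ?thesis using k by simp
  qed
qed

lemma moon_moser:
  assumes "finite V" and sym: "\<And>x y. E x y \<Longrightarrow> E y x" and irr: "\<And>x. \<not> E x x"
  shows "card {M. maxind E V M} ^ 3 \<le> 3 ^ card V"
  using assms(1)
proof (induction V rule: finite_psubset_induct)
  case (psubset V)
  show ?case
  proof (cases "V = {}")
    case True
    then have "{M. maxind E V M} = {{}}" unfolding maxind_def indepset_def by auto
    then show ?thesis using True by simp
  next
    case False
    define N where "N = (\<lambda>u. V \<inter> nbr E u)"
    obtain v0 where "v0 \<in> V" using False by auto
    obtain v where v: "v \<in> V" and vmin: "\<And>u. u \<in> V \<Longrightarrow> card (N v) \<le> card (N u)"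
      using ex_has_least_nat[of "\<lambda>u. u \<in> V" v0 "\<lambda>u. card (N u)"] \<open>v0 \<in> V\<close> by blast
    define c where "c = (\<lambda>u. card {M. maxind E (V - N u) M})"
    define s where "s = card (N v)"
    have finN: "finite (N u)" for u using psubset.hyps unfolding N_def by auto
    have Nsub: "N u \<subseteq> V" for u unfolding N_def by auto
    have uN: "u \<in> V \<Longrightarrow> u \<in> N u" for u unfolding N_def nbr_def by auto
    have sV: "s \<le> card V" unfolding s_def using card_mono[OF psubset.hyps Nsub] .
    have cu: "c u ^ 3 \<le> 3 ^ (card V - s)" if u: "u \<in> N v" for u
    proof -
      have uV: "u \<in> V" using u Nsub by auto
      have "V - N u \<subset> V" using uN[OF uV] uV by auto
      hence "c u ^ 3 \<le> 3 ^ card (V - N u)" unfolding c_def by (rule psubset.IH)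
      also have "card (V - N u) = card V - card (N u)"
        using card_Diff_subset[OF finN Nsub] .
      also have "\<dots> \<le> card V - s" unfolding s_def using vmin[OF uV] by simp
      finally show ?thesis by (simp add: power_increasing)
    qed
    have cover: "{M. maxind E V M} \<subseteq> (\<Union>u\<in>N v. insert u ` {M. maxind E (V - N u) M})"
    proof
      fix M assume "M \<in> {M. maxind E V M}"
      hence M: "maxind E V M" by simp
      have MV: "M \<subseteq> V" and Mind: "\<forall>x\<in>M. \<forall>y\<in>M. \<not> E x y"
        using M unfolding maxind_def indepset_def by auto
      obtain u where u: "u \<in> M" "u \<in> N v"
      proof (cases "v \<in> M")
        case True
        then show ?thesis using that[of v] v unfolding N_def nbr_def by auto
      next
        case False
        then obtain x where "x \<in> M" "E v x" using M v unfolding maxind_def by (meson DiffI sym)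
        then show ?thesis using that[of x] MV unfolding N_def nbr_def by auto
      qed
      have "maxind E (V - N u) (M - {u})"
        unfolding maxind_def indepset_def
      proof (intro conjI ballI)
        show "M - {u} \<subseteq> V - N u" using MV Mind u(1) unfolding N_def nbr_def by auto
        show "\<And>x y. x \<in> M - {u} \<Longrightarrow> y \<in> M - {u} \<Longrightarrow> \<not> E x y" using Mind by auto
        fix w assume w: "w \<in> V - N u - (M - {u})"
        hence "w \<in> V - M" "w \<noteq> u" "\<not> E u w" unfolding N_def nbr_def by auto
        then obtain x where "x \<in> M" "E w x" using M unfolding maxind_def by blast
        moreover have "x \<noteq> u" using \<open>E w x\<close> \<open>\<not> E u w\<close> sym by blast
        ultimately show "\<exists>x\<in>M - {u}. E w x" by blast
      qed
      moreover have "M = insert u (M - {u})" using u by auto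
      ultimately show "M \<in> (\<Union>u\<in>N v. insert u ` {M. maxind E (V - N u) M})" using u(2) by blast
    qed
    have "card {M. maxind E V M} \<le> card (\<Union>u\<in>N v. insert u ` {M. maxind E (V - N u) M})"
      by (rule card_mono[OF _ cover]) (use finN psubset.hyps finite_maxind in auto)
    also have "\<dots> \<le> (\<Sum>u\<in>N v. card (insert u ` {M. maxind E (V - N u) M}))"
      by (rule card_UN_le[OF finN])
    also have "\<dots> \<le> (\<Sum>u\<in>N v. c u)"
      unfolding c_def by (intro sum_mono card_image_le) (use psubset.hyps finite_maxind in auto)
    also have "\<dots> \<le> s * Max (c ` N v)"
      unfolding s_def using sum_bounded_above[of "N v" c "Max (c ` N v)"] finN by auto
    finally have le: "card {M. maxind E V M} \<le> s * Max (c ` N v)" .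
    have "N v \<noteq> {}" using uN[OF v] by auto
    then have "Max (c ` N v) \<in> c ` N v" using finN by (intro Max_in) auto
    then obtain u0 where u0: "u0 \<in> N v" "Max (c ` N v) = c u0" by auto
    have "card {M. maxind E V M} ^ 3 \<le> (s * Max (c ` N v)) ^ 3" using le by (rule power_mono) simp
    also have "\<dots> = s^3 * c u0 ^ 3" using u0 by (simp add: power_mult_distrib)
    also have "\<dots> \<le> 3^s * 3^(card V - s)" by (rule mult_le_mono[OF cube_le_pow3 cu[OF u0(1)]])
    also have "\<dots> = 3 ^ card V" using sV by (simp flip: power_add)
    finally show ?thesis .
  qed
qed



lemma extend_maxind:
  assumes fin: "finite V" and sym: "\<And>x y. E x y \<Longrightarrow> E y x" and irr: "\<And>x. \<not> E x x"
    and S: "indepset E V S"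
  shows "\<exists>M. maxind E V M \<and> S \<subseteq> M"
proof -
  have "\<exists>M. (indepset E V M \<and> S \<subseteq> M) \<and> (\<forall>M'. indepset E V M' \<and> S \<subseteq> M' \<longrightarrow> card M' \<le> card M)"
  proof (rule ex_has_greatest_nat[where b = "card V + 1"])
    show "indepset E V S \<and> S \<subseteq> S" using S by simp
    show "\<forall>y. indepset E V y \<and> S \<subseteq> y \<longrightarrow> card y < card V + 1"
      using card_mono[OF fin] unfolding indepset_def by (auto simp: less_Suc_eq_le)
  qed
  then obtain M where M: "indepset E V M" "S \<subseteq> M"
    and Mmax: "\<And>M'. indepset E V M' \<Longrightarrow> S \<subseteq> M' \<Longrightarrow> card M' \<le> card M" by blast
  have finM: "finite M" using M(1) fin unfolding indepset_def by (meson finite_subset)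
  have "\<forall>w\<in>V - M. \<exists>x\<in>M. E w x"
  proof (rule ccontr)
    assume "\<not> (\<forall>w\<in>V - M. \<exists>x\<in>M. E w x)"
    then obtain w where w: "w \<in> V" "w \<notin> M" "\<forall>x\<in>M. \<not> E w x" by blast
    have "indepset E V (insert w M)"
      using M(1) w irr sym unfolding indepset_def by blast
    hence "card (insert w M) \<le> card M" using Mmax M(2) by blast
    thus False using finM w(2) by simp
  qed
  thus ?thesis using M unfolding maxind_def by blast
qed

lemma half_lem: "(R/2)*(a - b) + (R/2)*a = R*a - (R/2)*b" for R a b :: real
  by (simp add: field_simps)

lemma geom_sum: "(\<Sum>j<d. (R/2)^(d-j) * R^j) = R^d - (R/2)^(d::nat)" for R :: real
proof (induction d)
  case 0 then show ?case by simp
next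
  case (Suc d)
  have "(\<Sum>j<Suc d. (R/2)^(Suc d-j) * R^j) = (\<Sum>j<d. (R/2)^(Suc d-j) * R^j) + (R/2) * R^d" by simp
  also have "(\<Sum>j<d. (R/2)^(Suc d-j) * R^j) = (R/2) * (\<Sum>j<d. (R/2)^(d-j) * R^j)"
    unfolding sum_distrib_left by (rule sum.cong) (auto simp: Suc_diff_le)
  also have "\<dots> = (R/2) * (R^d - (R/2)^d)" using Suc.IH by simp
  also have "(R/2) * (R^d - (R/2)^d) + (R/2) * R^d = R * R^d - (R/2) * (R/2)^d"
    using half_lem[of R "R^d" "(R/2)^d"] .
  also have "\<dots> = R^Suc d - (R/2)^Suc d" by simp
  finally show ?case .
qed

lemma count_level:
  assumes fin: "finite V" and sym: "\<And>x y. E x y \<Longrightarrow> E y x" and irr: "\<And>x. \<not> E x x"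
    and dmax: "\<And>S. indepset E V S \<Longrightarrow> card S \<le> d"
  shows "card {S. indepset E V S \<and> card S = j} \<le> card {M. maxind E V M} * (card V + 1)^(d-j)"
proof -
  let ?MIS = "{M. maxind E V M}"
  have finMIS: "finite ?MIS" using finite_maxind[OF fin] .
  have sub: "{S. indepset E V S \<and> card S = j} \<subseteq> (\<Union>M\<in>?MIS. (\<lambda>D. M - D) ` {D. D \<subseteq> M \<and> card D = card M - j})"
  proof
    fix S assume "S \<in> {S. indepset E V S \<and> card S = j}"
    hence S: "indepset E V S" "card S = j" by auto
    obtain M where M: "maxind E V M" "S \<subseteq> M" using extend_maxind[OF fin sym irr S(1)] by blast
    have finM: "finite M" using M(1) fin unfolding maxind_def indepset_def by (meson finite_subset)
    have "M - S \<subseteq> M" "card (M - S) = card M - j"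
      using card_Diff_subset[OF finite_subset[OF M(2) finM] M(2)] S(2) by auto
    moreover have "S = M - (M - S)" using M(2) by auto
    ultimately show "S \<in> (\<Union>M\<in>?MIS. (\<lambda>D. M - D) ` {D. D \<subseteq> M \<and> card D = card M - j})"
      using M(1) by blast
  qed
  have "card {S. indepset E V S \<and> card S = j} \<le> card (\<Union>M\<in>?MIS. (\<lambda>D. M - D) ` {D. D \<subseteq> M \<and> card D = card M - j})"
  proof (rule card_mono[OF _ sub])
    have "finite ((\<lambda>D. M - D) ` {D. D \<subseteq> M \<and> card D = card M - j})" if "M \<in> ?MIS" for M
    proof -
      have "M \<subseteq> V" using that unfolding maxind_def indepset_def by simp
      hence fM: "finite M" using fin by (rule finite_subset)
      have "finite {D. D \<subseteq> M \<and> card D = card M - j}" by (rule finite_subset[of _ "Pow M"]) (use fM in auto)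
      thus ?thesis by simp
    qed
    thus "finite (\<Union>M\<in>?MIS. (\<lambda>D. M - D) ` {D. D \<subseteq> M \<and> card D = card M - j})"
      using finMIS by blast
  qed
  also have "\<dots> \<le> (\<Sum>M\<in>?MIS. card ((\<lambda>D. M - D) ` {D. D \<subseteq> M \<and> card D = card M - j}))"
    by (rule card_UN_le[OF finMIS])
  also have "\<dots> \<le> (\<Sum>M\<in>?MIS. (card V + 1)^(d-j))"
  proof (rule sum_mono)
    fix M assume "M \<in> ?MIS"
    hence Mi: "indepset E V M" unfolding maxind_def by simp
    hence M: "M \<subseteq> V" "card M \<le> d" using dmax[OF Mi] unfolding indepset_def by auto
    have finM: "finite M" using M(1) fin by (rule finite_subset)
    have cMV: "card M \<le> card V" using card_mono[OF fin M(1)] .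
    have "card ((\<lambda>D. M - D) ` {D. D \<subseteq> M \<and> card D = card M - j}) \<le> card {D. D \<subseteq> M \<and> card D = card M - j}"
      by (rule card_image_le) (rule finite_subset[of _ "Pow M"], auto simp: finM)
    also have "\<dots> = card M choose (card M - j)" by (rule n_subsets[OF finM])
    also have "\<dots> \<le> card M ^ (card M - j)" by (rule binomial_le_pow) simp
    also have "\<dots> \<le> (card V + 1) ^ (card M - j)" by (rule power_mono) (use cMV in simp_all)
    also have "\<dots> \<le> (card V + 1) ^ (d - j)" by (rule power_increasing) (use M(2) in auto)
    finally show "card ((\<lambda>D. M - D) ` {D. D \<subseteq> M \<and> card D = card M - j}) \<le> (card V + 1)^(d-j)" .
  qed
  also have "\<dots> = card ?MIS * (card V + 1)^(d-j)" by simp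
  finally show ?thesis .
qed



lemma root_bound:
  assumes fin: "finite V" and sym: "\<And>x y. E x y \<Longrightarrow> E y x" and irr: "\<And>x. \<not> E x x"
    and root: "ip E V z = (0::complex)"
  shows "cmod z < 2 * real (card {M. maxind E V M}) * (real (card V) + 1)"
proof (rule ccontr)
  let ?I = "{S. indepset E V S}"
  define K where "K = card {M. maxind E V M}"
  define n where "n = card V"
  define R where "R = cmod z"
  assume "\<not> cmod z < 2 * real (card {M. maxind E V M}) * (real (card V) + 1)"
  hence RK: "R \<ge> 2 * real K * (real n + 1)" unfolding R_def K_def n_def by simp
  have finI: "finite ?I" using finite_indepsets[OF fin] .
  have "\<exists>S. indepset E V S \<and> (\<forall>S'. indepset E V S' \<longrightarrow> card S' \<le> card S)"
  proof (rule ex_has_greatest_nat[where b = "card V + 1"])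
    show "indepset E V {}" unfolding indepset_def by simp
    show "\<forall>y. indepset E V y \<longrightarrow> card y < card V + 1"
      using card_mono[OF fin] unfolding indepset_def by (auto simp: less_Suc_eq_le)
  qed
  then obtain S0 where S0: "indepset E V S0" and S0max: "\<And>S. indepset E V S \<Longrightarrow> card S \<le> card S0" by blast
  define d where "d = card S0"
  have e0: "indepset E V {}" unfolding indepset_def by simp
  obtain M0 where M0: "maxind E V M0" using extend_maxind[OF fin sym irr e0] by auto
  have K1: "K \<ge> 1" unfolding K_def using M0 finite_maxind[OF fin, of E]
    by (metis card_0_eq empty_iff less_one mem_Collect_eq not_le)
  have R0: "R > 0" using RK K1 by (smt (verit) of_nat_0_le_iff of_nat_1 of_nat_mono mult_pos_pos)
  have dmax: "\<And>S. indepset E V S \<Longrightarrow> card S \<le> d" using S0max unfolding d_def by simp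
  define Id where "Id = {S \<in> ?I. card S = d}"
  define Il where "Il = {S \<in> ?I. card S < d}"
  have Isplit: "?I = Id \<union> Il" using S0max unfolding Id_def Il_def d_def by force
  have disj: "Id \<inter> Il = {}" unfolding Id_def Il_def by auto
  have finId: "finite Id" "finite Il" using finI unfolding Id_def Il_def by auto
  have "0 = (\<Sum>S\<in>?I. z ^ card S)" using root unfolding ip_def by simp
  also have "\<dots> = (\<Sum>S\<in>Id. z ^ card S) + (\<Sum>S\<in>Il. z ^ card S)"
    unfolding Isplit by (rule sum.union_disjoint[OF finId disj])
  also have "(\<Sum>S\<in>Id. z ^ card S) = (\<Sum>S\<in>Id. z ^ d)" by (rule sum.cong) (auto simp: Id_def)
  also have "\<dots> = of_nat (card Id) * z ^ d" by simp
  finally have eq: "of_nat (card Id) * z ^ d = - (\<Sum>S\<in>Il. z ^ card S)" by (simp add: eq_neg_iff_add_eq_0)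
  have cId: "card Id \<ge> 1" using S0 finId(1) unfolding Id_def d_def
    by (metis (mono_tags, lifting) One_nat_def Suc_leI card_gt_0_iff empty_iff mem_Collect_eq)
  have "real (card Id) * R ^ d = cmod (\<Sum>S\<in>Il. z ^ card S)"
    using arg_cong[OF eq, of cmod] unfolding R_def by (simp add: norm_mult norm_power)
  also have "\<dots> \<le> (\<Sum>S\<in>Il. R ^ card S)"
    unfolding R_def by (rule order_trans[OF norm_sum]) (simp add: norm_power)
  also have "\<dots> = (\<Sum>j\<in>{..<d}. (\<Sum>S\<in>{S \<in> Il. card S = j}. R ^ card S))"
    by (rule sum.group[symmetric]) (use finId in \<open>auto simp: Il_def\<close>)
  also have "\<dots> = (\<Sum>j<d. real (card {S. indepset E V S \<and> card S = j}) * R ^ j)"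
  proof (rule sum.cong[OF refl])
    fix j assume "j \<in> {..<d}"
    hence "{S \<in> Il. card S = j} = {S. indepset E V S \<and> card S = j}" unfolding Il_def by auto
    thus "(\<Sum>S\<in>{S \<in> Il. card S = j}. R ^ card S) = real (card {S. indepset E V S \<and> card S = j}) * R ^ j"
      by simp
  qed
  also have "\<dots> \<le> (\<Sum>j<d. (R/2)^(d-j) * R ^ j)"
  proof (rule sum_mono)
    fix j assume j: "j \<in> {..<d}"
    have cl: "card {S. indepset E V S \<and> card S = j} \<le> K * (n + 1)^(d-j)"
      unfolding K_def n_def by (rule count_level[where V=V and E=E and d=d and j=j, OF fin sym irr dmax])
    have "real (card {S. indepset E V S \<and> card S = j}) \<le> real (K * (n + 1)^(d-j))"
      using cl by (rule of_nat_mono)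
    also have "\<dots> = real K * (real n + 1)^(d-j)" by (simp add: add.commute)
    also have "\<dots> \<le> real K ^ (d-j) * (real n + 1)^(d-j)"
    proof (rule mult_right_mono)
      show "real K \<le> real K ^ (d-j)" using power_increasing[of 1 "d-j" "real K"] K1 j by simp
    qed simp
    also have "\<dots> = (real K * (real n + 1))^(d-j)" by (simp add: power_mult_distrib)
    also have "\<dots> \<le> (R/2)^(d-j)" by (rule power_mono) (use RK in simp_all)
    finally show "real (card {S. indepset E V S \<and> card S = j}) * R ^ j \<le> (R/2)^(d-j) * R ^ j"
      using R0 by (simp add: mult_right_mono)
  qed
  also have "\<dots> = R^d - (R/2)^d" by (rule geom_sum)
  also have "\<dots> < R^d" using R0 by simp
  finally have "real (card Id) * R ^ d < R ^ d" .
  moreover have "R ^ d \<le> real (card Id) * R ^ d" using cId R0 by simp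
  ultimately show False by simp
qed



lemma ip_zero: "finite V \<Longrightarrow> ip E V (0::'a::comm_ring_1) = 1"
proof -
  assume fin: "finite V"
  have "ip E V (0::'a) = (\<Sum>S\<in>{S. indepset E V S}. if S = {} then 1 else 0)"
    unfolding ip_def
  proof (rule sum.cong[OF refl])
    fix S assume "S \<in> {S. indepset E V S}"
    hence "S \<subseteq> V" unfolding indepset_def by simp
    hence finS: "finite S" using fin by (rule finite_subset)
    show "(0::'a) ^ card S = (if S = {} then 1 else 0)"
    proof (cases "S = {}")
      case True
      then show ?thesis by simp
    next
      case False
      then have "card S > 0" using finS by (simp add: card_gt_0_iff)
      then show ?thesis using False by (simp add: power_0_left)
    qed
  qed
  also have "\<dots> = (if {} \<in> {S. indepset E V S} then 1 else 0)"
    by (rule sum.delta[OF finite_indepsets[OF fin]])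
  also have "\<dots> = 1" by (simp add: indepset_def)
  finally show ?thesis .
qed

definition Mset :: "nat \<Rightarrow> real set" where
  "Mset n = {cmod z | z E. simple_graph_on n E \<and> poly (indep_poly n E) z = 0}"

lemma finite_Mset: "finite (Mset n)"
proof -
  let ?Es = "{E. simple_graph_on n E}"
  have finEs: "finite ?Es"
  proof (rule finite_subset)
    show "?Es \<subseteq> (\<lambda>R x y. (x, y) \<in> R) ` Pow ({..<n} \<times> {..<n})"
    proof
      fix E assume "E \<in> ?Es"
      hence "{(x,y). E x y} \<subseteq> {..<n} \<times> {..<n}" unfolding simple_graph_on_def by auto
      moreover have "E = (\<lambda>x y. (x, y) \<in> {(x,y). E x y})" by simp
      ultimately show "E \<in> (\<lambda>R x y. (x, y) \<in> R) ` Pow ({..<n} \<times> {..<n})"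
        by (intro image_eqI[of _ _ "{(x,y). E x y}"]) simp_all
    qed
  qed simp
  have finR: "finite {z. poly (indep_poly n E) z = 0}" for E
  proof (rule poly_roots_finite)
    have "poly (indep_poly n E) 0 = 1" unfolding poly_indep by (rule ip_zero) simp
    thus "indep_poly n E \<noteq> 0" by auto
  qed
  have "Mset n \<subseteq> (\<Union>E\<in>?Es. cmod ` {z. poly (indep_poly n E) z = 0})"
  proof
    fix x assume "x \<in> Mset n"
    then obtain z E where "x = cmod z" "simple_graph_on n E" "poly (indep_poly n E) z = 0"
      unfolding Mset_def by blast
    thus "x \<in> (\<Union>E\<in>?Es. cmod ` {z. poly (indep_poly n E) z = 0})" by auto
  qed
  moreover have "finite (\<Union>E\<in>?Es. cmod ` {z. poly (indep_poly n E) z = 0})"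
    by (rule finite_UN_I[OF finEs]) (rule finite_imageI[OF finR])
  ultimately show ?thesis by (rule finite_subset)
qed

lemma K_bound:
  assumes "simple_graph_on n E"
  shows "real (card {M. maxind E {..<n} M}) \<le> 3 powr (real n / 3)"
proof -
  have sym: "\<And>x y. E x y \<Longrightarrow> E y x" and irr: "\<And>x. \<not> E x x"
    using assms unfolding simple_graph_on_def by auto
  define K where "K = real (card {M. maxind E {..<n} M})"
  have "card {M. maxind E {..<n} M} ^ 3 \<le> 3 ^ card {..<n}" by (rule moon_moser[OF _ sym irr]) simp
  hence "card {M. maxind E {..<n} M} ^ 3 \<le> 3 ^ n" by simp
  hence "real (card {M. maxind E {..<n} M} ^ 3) \<le> real (3 ^ n)" by (rule of_nat_mono)
  hence K3: "K ^ 3 \<le> 3 ^ n" unfolding K_def by simp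
  have "(3 powr (real n / 3)) ^ 3 = 3 ^ n"
    by (simp add: powr_power powr_realpow)
  show ?thesis
  proof (rule ccontr)
    assume "\<not> ?thesis"
    hence "3 powr (real n / 3) < K" unfolding K_def by simp
    hence "(3 powr (real n / 3)) ^ 3 < K ^ 3" by (rule power_strict_mono) auto
    thus False using K3 \<open>(3 powr (real n / 3)) ^ 3 = 3 ^ n\<close> by linarith
  qed
qed

lemma Mset_upper:
  assumes "x \<in> Mset n"
  shows "x \<le> 2 * 3 powr (real n / 3) * (real n + 1)"
proof -
  obtain z E where x: "x = cmod z" and G: "simple_graph_on n E" and r: "poly (indep_poly n E) z = 0"
    using assms unfolding Mset_def by blast
  have sym: "\<And>x y. E x y \<Longrightarrow> E y x" and irr: "\<And>x. \<not> E x x"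
    using G unfolding simple_graph_on_def by auto
  have "cmod z < 2 * real (card {M. maxind E {..<n} M}) * (real (card {..<n}) + 1)"
    by (rule root_bound[OF _ sym irr]) (use r in \<open>simp_all add: poly_indep\<close>)
  also have "\<dots> \<le> 2 * 3 powr (real n / 3) * (real n + 1)"
    unfolding card_lessThan using K_bound[OF G] by (intro mult_right_mono mult_left_mono) auto
  finally show ?thesis using x by simp
qed

lemma M_bounds:
  assumes n: "n \<ge> 4"
  shows "3 ^ ((n - 1) div 3) \<le> max_indep_root_modulus n"
    and "max_indep_root_modulus n \<le> 2 * 3 powr (real n / 3) * (real n + 1)"
proof -
  obtain E z where "simple_graph_on n E" "poly (indep_poly n E) z = 0" "cmod z \<ge> 3^((n-1) div 3)"
    using lower_bound[OF n] by blast
  hence mem: "cmod z \<in> Mset n" unfolding Mset_def by blast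
  have eq: "max_indep_root_modulus n = Max (Mset n)" unfolding max_indep_root_modulus_def Mset_def by simp
  show "3 ^ ((n - 1) div 3) \<le> max_indep_root_modulus n"
    unfolding eq using Max_ge[OF finite_Mset mem] \<open>cmod z \<ge> _\<close> by linarith
  show "max_indep_root_modulus n \<le> 2 * 3 powr (real n / 3) * (real n + 1)"
    unfolding eq by (rule Max.boundedI[OF finite_Mset]) (use mem Mset_upper in auto)
qed



theorem corollary1:
  shows "((\<lambda>n. log 3 (max_indep_root_modulus n) / real n) \<longlongrightarrow> 1/3) sequentially"
proof (rule tendsto_sandwich[where f = "\<lambda>n. (real n - 3) / (3 * real n)"
      and h = "\<lambda>n. (log 3 2 + log 3 (real n + 1) + real n / 3) / real n"])
  show "((\<lambda>n. (real n - 3) / (3 * real n)) \<longlongrightarrow> 1/3) sequentially" by real_asymp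
  show "((\<lambda>n. (log 3 2 + log 3 (real n + 1) + real n / 3) / real n) \<longlongrightarrow> 1/3) sequentially"
    by real_asymp
  have ev: "eventually (\<lambda>n. n \<ge> (4::nat)) sequentially" by (rule eventually_ge_at_top)
  show "eventually (\<lambda>n. (real n - 3) / (3 * real n) \<le> log 3 (max_indep_root_modulus n) / real n) sequentially"
    using ev
  proof eventually_elim
    case (elim n)
    define k where "k = (n - 1) div 3"
    have nk: "n \<le> 3 * k + 3" unfolding k_def by presburger
    have lb: "3 ^ k \<le> max_indep_root_modulus n" using M_bounds(1)[OF elim] unfolding k_def .
    have "real k = log 3 (3 ^ k)" by simp
    also have "\<dots> \<le> log 3 (max_indep_root_modulus n)"
      by (rule log_mono) (use lb in auto)
    finally have "real k \<le> log 3 (max_indep_root_modulus n)" .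
    moreover have "real n \<le> 3 * real k + 3" using nk by linarith
    moreover have "(real n - 3) / 3 \<le> real k" using \<open>real n \<le> 3 * real k + 3\<close> by (simp add: field_simps)
    ultimately have "(real n - 3) / 3 \<le> log 3 (max_indep_root_modulus n)" by linarith
    hence "((real n - 3) / 3) / real n \<le> log 3 (max_indep_root_modulus n) / real n"
      by (rule divide_right_mono) simp
    thus ?case by simp
  qed
  show "eventually (\<lambda>n. log 3 (max_indep_root_modulus n) / real n \<le> (log 3 2 + log 3 (real n + 1) + real n / 3) / real n) sequentially"
    using ev
  proof eventually_elim
    case (elim n)
    have pos: "0 < max_indep_root_modulus n"
      using M_bounds(1)[OF elim] by (smt (verit) zero_less_power)
    have "log 3 (max_indep_root_modulus n) \<le> log 3 (2 * 3 powr (real n / 3) * (real n + 1))"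
      by (rule log_mono) (use pos M_bounds(2)[OF elim] in auto)
    also have "\<dots> = log 3 2 + log 3 (real n + 1) + real n / 3"
      by (simp add: log_mult)
    finally show ?case by (rule divide_right_mono) simp
  qed
qed


end
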